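(* (a) Let $n\ge1$ and $x\in\overline{L_n}$. Then there are ultrafilters $x_i\in\overline{L_i}$, $1\le i\le n-1$, such that $1\,\tilde{\mid}\,x_1\,\tilde{\mid}\,x_2\cdots\tilde{\mid}\,x_{n-1}\,\tilde{\mid}\,x$. (b) For any ultrafilter $x_m\in\overline{L_m}$ there exists a sequence $\langle x_n: n\ge m\rangle$ with $x_n\in\overline{L_n}$ such that $x_m\,\tilde{\mid}\,x_n$ for all $n\ge m$.
   Context: $\mathbb{N}=\{1,2,3,\dots\}$; $\beta\mathbb{N}$ is the set of ultrafilters on $\mathbb{N}$ (Stone–Čech compactification, naturals identified with principal ultrafilters). For $A\subseteq\mathbb{N}$, $\overline{A}=\{x\in\beta\mathbb{N}:A\in x\}$. $P$ is the set of primes, $L_0=\{1\}$, $L_n=\{a_1\cdots a_n:a_i\in P\}$. For $x,y\in\beta\mathbb{N}$, $x\,\tilde{\mid}\,y$ iff for every $A\in x$ the set $\{k\in\mathbb{N}:\exists a\in A,\ a\mid k\}$ belongs to $y$. *)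

theory Defs
  imports "HOL-Computational_Algebra.Primes"
begin

text \<open>The paper's naturals N = {1,2,3,...}, as a subset of nat.\<close>
definition PosNat :: "nat set" where
  "PosNat = {k. k \<ge> 1}"

text \<open>Ultrafilters on N (points of beta N), represented as families of subsets of N.\<close>
definition ultrafilter_N :: "nat set set \<Rightarrow> bool" where
  "ultrafilter_N U \<longleftrightarrow>
     U \<subseteq> Pow PosNat \<and> PosNat \<in> U \<and> {} \<notin> U \<and>
     (\<forall>A\<in>U. \<forall>B\<in>U. A \<inter> B \<in> U) \<and>
     (\<forall>A\<in>U. \<forall>B. A \<subseteq> B \<and> B \<subseteq> PosNat \<longrightarrow> B \<in> U) \<and>
     (\<forall>A. A \<subseteq> PosNat \<longrightarrow> A \<in> U \<or> PosNat - A \<in> U)"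

text \<open>The principal ultrafilter at n (identification of n with a point of beta N).\<close>
definition principal_N :: "nat \<Rightarrow> nat set set" where
  "principal_N n = {A. A \<subseteq> PosNat \<and> n \<in> A}"

definition Lev :: "nat \<Rightarrow> nat set" where
  "Lev n = {prod_list xs | xs. length xs = n \<and> (\<forall>p\<in>set xs. prime p)}"

definition tdvd :: "nat set set \<Rightarrow> nat set set \<Rightarrow> bool" where
  "tdvd x y \<longleftrightarrow> (\<forall>A\<in>x. {k\<in>PosNat. \<exists>a\<in>A. a dvd k} \<in> y)"

end

theory Submission
  imports Defs
begin

definition img :: "(nat \<Rightarrow> nat) \<Rightarrow> nat set set \<Rightarrow> nat set set" where
  "img f U = {B. B \<subseteq> PosNat \<and> {a\<in>PosNat. f a \<in> B} \<in> U}"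

lemma uf_up: "ultrafilter_N U \<Longrightarrow> A \<in> U \<Longrightarrow> A \<subseteq> B \<Longrightarrow> B \<subseteq> PosNat \<Longrightarrow> B \<in> U"
  unfolding ultrafilter_N_def by blast

lemma img_uf:
  assumes U: "ultrafilter_N U" and f: "\<And>a. a \<in> PosNat \<Longrightarrow> f a \<in> PosNat"
  shows "ultrafilter_N (img f U)"
proof -
  let ?P = "\<lambda>B. {a\<in>PosNat. f a \<in> B}"
  have int: "?P (A \<inter> B) = ?P A \<inter> ?P B" for A B by auto
  have cmp: "?P (PosNat - A) = PosNat - ?P A" for A using f by auto
  have all: "?P PosNat = PosNat" using f by auto
  show ?thesis
    unfolding ultrafilter_N_def img_def
  proof (intro conjI ballI allI impI)
    show "PosNat \<in> {B. B \<subseteq> PosNat \<and> ?P B \<in> U}" using U all unfolding ultrafilter_N_def by auto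
    show "{} \<notin> {B. B \<subseteq> PosNat \<and> ?P B \<in> U}" using U unfolding ultrafilter_N_def by auto
  next
    fix A B assume "A \<in> {B. B \<subseteq> PosNat \<and> ?P B \<in> U}" "B \<in> {B. B \<subseteq> PosNat \<and> ?P B \<in> U}"
    then have "?P A \<in> U" "?P B \<in> U" "A \<inter> B \<subseteq> PosNat" by auto
    then have "?P A \<inter> ?P B \<in> U" using U unfolding ultrafilter_N_def by blast
    then show "A \<inter> B \<in> {B. B \<subseteq> PosNat \<and> ?P B \<in> U}" using int[of A B] \<open>A \<inter> B \<subseteq> PosNat\<close> by simp
  next
    fix A B assume "A \<in> {B. B \<subseteq> PosNat \<and> ?P B \<in> U}" "A \<subseteq> B \<and> B \<subseteq> PosNat"
    then show "B \<in> {B. B \<subseteq> PosNat \<and> ?P B \<in> U}" using uf_up[OF U, of "?P A" "?P B"] by auto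
  next
    fix A :: "nat set" assume A: "A \<subseteq> PosNat"
    have "?P A \<in> U \<or> PosNat - ?P A \<in> U" using U unfolding ultrafilter_N_def by auto
    then show "A \<in> {B. B \<subseteq> PosNat \<and> ?P B \<in> U} \<or> PosNat - A \<in> {B. B \<subseteq> PosNat \<and> ?P B \<in> U}"
      using A cmp[of A] by auto
  qed auto
qed

lemma img_id:
  assumes U: "ultrafilter_N U" and f: "\<And>a. a \<in> PosNat \<Longrightarrow> f a = a"
  shows "img f U = U"
proof -
  have "{a\<in>PosNat. f a \<in> B} = B" if "B \<subseteq> PosNat" for B using that f by auto
  moreover have "U \<subseteq> Pow PosNat" using U unfolding ultrafilter_N_def by auto
  ultimately show ?thesis unfolding img_def by auto
qed

lemma Lev_pos: "Lev n \<subseteq> PosNat"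
proof
  fix k assume "k \<in> Lev n"
  then obtain xs where k: "k = prod_list xs" "\<forall>p\<in>set xs. prime p" unfolding Lev_def by auto
  have "prod_list xs \<noteq> 0" using k(2) by (induction xs) (auto simp: prime_gt_0_nat)
  then show "k \<in> PosNat" using k unfolding PosNat_def by auto
qed

lemma Lev0: "Lev 0 = {1}" unfolding Lev_def by auto

lemma prime_in_list: "prime (p::nat) \<Longrightarrow> \<forall>q\<in>set xs. prime q \<Longrightarrow> p dvd prod_list xs \<Longrightarrow> p \<in> set xs"
proof (induction xs)
  case Nil then show ?case by auto
next
  case (Cons a xs)
  show ?case
  proof (cases "p dvd a")
    case True
    then have "p = a" using Cons.prems primes_dvd_imp_eq by auto
    then show ?thesis by simp
  next
    case False
    then have "p dvd prod_list xs" using Cons.prems prime_dvd_mult_iff by auto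
    then show ?thesis using Cons by auto
  qed
qed

lemma prod_remove1: "(p::nat) \<in> set xs \<Longrightarrow> prod_list xs = p * prod_list (remove1 p xs)"
  by (induction xs) auto

definition gdn :: "nat \<Rightarrow> nat" where
  "gdn k = (if \<exists>p. prime p \<and> p dvd k then k div (SOME p. prime p \<and> p dvd k) else k)"

lemma gdn_pos: "k \<in> PosNat \<Longrightarrow> gdn k \<in> PosNat"
proof -
  assume k: "k \<in> PosNat"
  show ?thesis
  proof (cases "\<exists>p. prime p \<and> p dvd k")
    case True
    define p where "p = (SOME p. prime p \<and> p dvd k)"
    have p: "prime p \<and> p dvd k" using someI_ex[OF True] p_def by auto
    have "p \<le> k" using p k unfolding PosNat_def by (auto intro: dvd_imp_le)
    moreover have "p > 0" using p prime_gt_0_nat by auto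
    ultimately have "k div p \<ge> 1" by (metis One_nat_def Suc_leI div_greater_zero_iff)
    then show ?thesis using True p_def unfolding gdn_def PosNat_def by auto
  qed (use k in \<open>auto simp: gdn_def\<close>)
qed

lemma gdn_dvd: "gdn k dvd k"
proof (cases "\<exists>p. prime p \<and> p dvd k")
  case True
  define p where "p = (SOME p. prime p \<and> p dvd k)"
  have p: "prime p \<and> p dvd k" using someI_ex[OF True] p_def by auto
  then have "k div p dvd k" by (metis dvd_def dvd_triv_right nonzero_mult_div_cancel_left not_prime_0)
  then show ?thesis using True p_def unfolding gdn_def by simp
next
  case False
  then show ?thesis unfolding gdn_def by (simp only: if_False dvd_refl)
qed

lemma gdn_Lev: "k \<in> Lev (Suc j) \<Longrightarrow> gdn k \<in> Lev j"
proof -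
  assume "k \<in> Lev (Suc j)"
  then obtain xs where xs: "k = prod_list xs" "length xs = Suc j" "\<forall>p\<in>set xs. prime p" unfolding Lev_def by auto
  then obtain q ys where qys: "xs = q # ys" by (cases xs) auto
  then have "prime q" "q dvd k" using xs by auto
  then have ex: "\<exists>p. prime p \<and> p dvd k" by blast
  define p where "p = (SOME p. prime p \<and> p dvd k)"
  have p: "prime p \<and> p dvd k" using someI_ex[OF ex] p_def by blast
  have g: "gdn k = k div p" using ex p_def unfolding gdn_def by simp
  have pin: "p \<in> set xs" using prime_in_list p xs by blast
  have "k = p * prod_list (remove1 p xs)" using prod_remove1[OF pin] xs by simp
  then have "k div p = prod_list (remove1 p xs)" using p prime_gt_0_nat by simp
  moreover have "length (remove1 p xs) = j" using pin xs by (simp add: length_remove1)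
  moreover have "\<forall>q\<in>set (remove1 p xs). prime q" 
  proof -
    have "set (remove1 p xs) \<subseteq> set xs" by (rule set_remove1_subset)
    then show ?thesis using xs(3) by (simp add: subset_iff)
  qed
  ultimately have "k div p \<in> Lev j" unfolding Lev_def by blast
  then show ?thesis using g by simp
qed

lemma gdn_pow_pos: "k \<in> PosNat \<Longrightarrow> (gdn ^^ d) k \<in> PosNat"
  by (induction d) (auto simp: gdn_pos)

lemma gdn_pow_Lev: "k \<in> Lev (i + d) \<Longrightarrow> (gdn ^^ d) k \<in> Lev i"
proof (induction d arbitrary: k)
  case 0 then show ?case by simp
next
  case (Suc d)
  have "(gdn ^^ Suc d) k = (gdn ^^ d) (gdn k)" by (simp only: funpow_Suc_right comp_apply)
  moreover have "gdn k \<in> Lev (i + d)" using gdn_Lev Suc.prems by auto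
  ultimately show ?case using Suc.IH by auto
qed

lemma partA:
  assumes n: "n \<ge> 1" and x: "ultrafilter_N x" and L: "Lev n \<in> x"
  shows "\<exists>xs :: nat \<Rightarrow> nat set set.
          xs 0 = principal_N 1 \<and> xs n = x \<and>
          (\<forall>i. 1 \<le> i \<and> i \<le> n - 1 \<longrightarrow> ultrafilter_N (xs i) \<and> Lev i \<in> xs i) \<and>
          (\<forall>i<n. tdvd (xs i) (xs (Suc i)))"
proof -
  define xs where "xs i = img (gdn ^^ (n - i)) x" for i
  have uf: "ultrafilter_N (xs i)" for i unfolding xs_def by (rule img_uf[OF x gdn_pow_pos])
  have LL: "Lev i \<in> xs i" if "i \<le> n" for i
  proof -
    have "Lev n \<subseteq> {a\<in>PosNat. (gdn ^^ (n - i)) a \<in> Lev i}"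
      using Lev_pos gdn_pow_Lev[of _ i "n - i"] that by auto
    then show ?thesis unfolding xs_def img_def using uf_up[OF x L] Lev_pos by auto
  qed
  have "xs 0 = principal_N 1"
  proof
    show "xs 0 \<subseteq> principal_N 1"
    proof
      fix B assume B: "B \<in> xs 0"
      have "B \<inter> {1} \<in> xs 0" using B LL[of 0] uf[of 0] Lev0 unfolding ultrafilter_N_def by auto
      then have "1 \<in> B" using uf[of 0] unfolding ultrafilter_N_def by (metis Int_insert_right_if0 inf_bot_right)
      then show "B \<in> principal_N 1" using B uf[of 0] unfolding principal_N_def ultrafilter_N_def by auto
    qed
    show "principal_N 1 \<subseteq> xs 0"
      using LL[of 0] uf[of 0] Lev0 unfolding principal_N_def ultrafilter_N_def by auto
  qed
  moreover have "xs n = x" unfolding xs_def using img_id[OF x] by simp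
  moreover have "tdvd (xs i) (xs (Suc i))" if "i < n" for i
    unfolding tdvd_def
  proof
    fix A assume A: "A \<in> xs i"
    let ?C = "{k\<in>PosNat. \<exists>a\<in>A. a dvd k}"
    have P: "{a\<in>PosNat. (gdn ^^ (n - i)) a \<in> A} \<in> x" and AP: "A \<subseteq> PosNat" using A unfolding xs_def img_def by auto
    have eq: "(gdn ^^ (n - i)) a = gdn ((gdn ^^ (n - Suc i)) a)" for a
    proof -
      have "n - i = Suc (n - Suc i)" using that by simp
      then show ?thesis by simp
    qed
    have "{a\<in>PosNat. (gdn ^^ (n - i)) a \<in> A} \<subseteq> {a\<in>PosNat. (gdn ^^ (n - Suc i)) a \<in> ?C}"
      using eq gdn_dvd gdn_pow_pos by auto
    then show "?C \<in> xs (Suc i)" unfolding xs_def img_def using uf_up[OF x P] by auto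
  qed
  ultimately show ?thesis using uf LL by (intro exI[of _ xs]) auto
qed

lemma partB:
  assumes x: "ultrafilter_N xm" and L: "Lev m \<in> xm"
  shows "\<exists>xs :: nat \<Rightarrow> nat set set.
          xs m = xm \<and>
          (\<forall>n\<ge>m. ultrafilter_N (xs n) \<and> Lev n \<in> xs n \<and> tdvd xm (xs n))"
proof -
  define xs where "xs n = img (\<lambda>a. a * 2 ^ (n - m)) xm" for n
  have fpos: "a * 2 ^ (n - m) \<in> PosNat" if "a \<in> PosNat" for a n :: nat using that unfolding PosNat_def by auto
  have uf: "ultrafilter_N (xs n)" for n unfolding xs_def by (rule img_uf[OF x fpos])
  have LL: "Lev n \<in> xs n" if "m \<le> n" for n
  proof -
    have "k * 2 ^ (n - m) \<in> Lev n" if k: "k \<in> Lev m" for k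
    proof -
      obtain ys where ys: "k = prod_list ys" "length ys = m" "\<forall>p\<in>set ys. prime p" using k unfolding Lev_def by auto
      have "k * 2 ^ (n - m) = prod_list (ys @ replicate (n - m) 2)" using ys by (simp add: prod_list_replicate)
      moreover have "length (ys @ replicate (n - m) 2) = n" using ys \<open>m \<le> n\<close> by simp
      moreover have "\<forall>p\<in>set (ys @ replicate (n - m) 2). prime p" using ys by auto
      ultimately show ?thesis unfolding Lev_def by blast
    qed
    then have "Lev m \<subseteq> {a\<in>PosNat. a * 2 ^ (n - m) \<in> Lev n}" using Lev_pos by auto
    then show ?thesis unfolding xs_def img_def using uf_up[OF x L] Lev_pos by auto
  qed
  have "xs m = xm" unfolding xs_def using img_id[OF x] by simp
  moreover have "tdvd xm (xs n)" for n
    unfolding tdvd_def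
  proof
    fix A assume A: "A \<in> xm"
    let ?C = "{k\<in>PosNat. \<exists>a\<in>A. a dvd k}"
    have AP: "A \<subseteq> PosNat" using A x unfolding ultrafilter_N_def by auto
    have "A \<subseteq> {a\<in>PosNat. a * 2 ^ (n - m) \<in> ?C}"
    proof
      fix a assume a: "a \<in> A"
      then have "a \<in> PosNat" using AP by auto
      then show "a \<in> {a\<in>PosNat. a * 2 ^ (n - m) \<in> ?C}"
        using fpos[of a n] a dvd_triv_left[of a "2 ^ (n - m)"] by blast
    qed
    then show "?C \<in> xs n" unfolding xs_def img_def using uf_up[OF x A] by auto
  qed
  ultimately show ?thesis using uf LL by (intro exI[of _ xs]) auto
qed

theorem corollary2p15:
  shows
  "(\<forall>n x. n \<ge> 1 \<and> ultrafilter_N x \<and> Lev n \<in> x \<longrightarrow>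
      (\<exists>xs :: nat \<Rightarrow> nat set set.
          xs 0 = principal_N 1 \<and> xs n = x \<and>
          (\<forall>i. 1 \<le> i \<and> i \<le> n - 1 \<longrightarrow> ultrafilter_N (xs i) \<and> Lev i \<in> xs i) \<and>
          (\<forall>i<n. tdvd (xs i) (xs (Suc i)))))
   \<and>
   (\<forall>m xm. ultrafilter_N xm \<and> Lev m \<in> xm \<longrightarrow>
      (\<exists>xs :: nat \<Rightarrow> nat set set.
          xs m = xm \<and>
          (\<forall>n\<ge>m. ultrafilter_N (xs n) \<and> Lev n \<in> xs n \<and> tdvd xm (xs n))))"
  apply (intro conjI allI impI)
   apply (rule partA; blast)
  apply (rule partB; blast)
  done

end
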